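(* Let $\mathcal{N}=\{1,\dots,N\}$ be a set of clients, let $G$ be a positive integer, and for each $n\in\mathcal{N}$ let $\rho_n>0$, $E_n>0$, $D_n>0$, $C_n\in\mathbb{R}$ and $p\in\mathbb{R}$. Each client $n$ chooses $x_n\in[0,D_n]$ and has cost $$F_n(x_n,\boldsymbol{x}_{-n})=\rho_n\left(\frac{1}{\sqrt{\big(x_n+\sum_{n'\neq n}x_{n'}\big)G}}+\frac{1}{G}\right)+E_nx_n+C_n+p .$$ Then for every $n\in\mathcal{N}$ and every $\boldsymbol{x}_{-n}\in\prod_{n'\neq n}[0,D_{n'}]$, the best response of client $n$ (the minimizer of $F_n(\cdot,\boldsymbol{x}_{-n})$ over $[0,D_n]$) is $$x_n^{\rm BR}(\boldsymbol{x}_{-n})=\min\left\{D_n,\ \max\left\{\sqrt[3]{\frac{\rho_n^2}{4GE_n^2}}-\sum_{n'\in\mathcal{N},n'\neq n}x_{n'},\ 0\right\}\right\}.$$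
   Context: Here $\boldsymbol{x}_{-n}$ denotes the vector of choices of all clients other than $n$. The cost is interpreted as $+\infty$ when $\sum_{n'\in\mathcal{N}}x_{n'}=0$. *)

theory Defs
  imports "HOL-Analysis.Analysis"
begin

text \<open>The value x n itself is ignored.\<close>
definition client_cost ::
  "nat \<Rightarrow> nat \<Rightarrow> (nat \<Rightarrow> real) \<Rightarrow> (nat \<Rightarrow> real) \<Rightarrow> (nat \<Rightarrow> real) \<Rightarrow> real
    \<Rightarrow> nat \<Rightarrow> real \<Rightarrow> (nat \<Rightarrow> real) \<Rightarrow> ereal" where
  "client_cost N G \<rho> E C p n xn x =
     (let s = xn + (\<Sum>n'\<in>{1..N} - {n}. x n') in
      if s = 0 then PInfty
      else ereal (\<rho> n * (1 / sqrt (s * real G) + 1 / real G) + E n * xn + C n + p))"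

end

theory Submission imports Defs begin

lemma keyu:
  fixes a e c u1 u2 :: real
  assumes "a > 0" "e > 0" "c > 0" "a = 2*e*c^3" "0 < u1" "u1 < u2"
  shows "u2 \<le> c \<Longrightarrow> a/u2 + e*u2^2 < a/u1 + e*u1^2"
    and "c \<le> u1 \<Longrightarrow> a/u1 + e*u1^2 < a/u2 + e*u2^2"
proof -
  have u2: "u2 > 0" using assms by linarith
  have id: "u1*u2*((a/u2 + e*u2^2) - (a/u1 + e*u1^2)) = (u2-u1)*e*((u1+u2)*(u1*u2) - 2*c^3)"
    using assms u2 by (simp add: field_simps power2_eq_square power3_eq_cube) 
  have pos: "u1*u2 > 0" using assms u2 by simp
  show "u2 \<le> c \<Longrightarrow> a/u2 + e*u2^2 < a/u1 + e*u1^2"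
  proof -
    assume h: "u2 \<le> c"
    have "u1 + u2 < 2*c" using h assms by linarith
    moreover have "u1*u2 < c*c" using h assms u2 by (intro mult_less_le_imp_less) auto
    ultimately have "(u1+u2)*(u1*u2) < (2*c)*(c*c)"
      using pos assms by (meson less_eq_real_def mult_strict_mono' add_pos_pos u2)
    hence "(u2-u1)*e*((u1+u2)*(u1*u2) - 2*c^3) < 0"
      using assms by (simp add: mult_pos_neg power3_eq_cube mult.assoc)
    hence "u1*u2*((a/u2 + e*u2^2) - (a/u1 + e*u1^2)) < 0" using id by simp
    thus ?thesis using pos assms u2 by (auto simp add: mult_less_0_iff)
  qed
  show "c \<le> u1 \<Longrightarrow> a/u1 + e*u1^2 < a/u2 + e*u2^2"
  proof -
    assume h: "c \<le> u1"
    have A: "2*c < u1 + u2" using h assms by linarith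
    have B: "c*c < u1*u2" using h assms u2 by (intro mult_le_less_imp_less) auto
    have "(2*c)*(c*c) < (u1+u2)*(u1*u2)"
      using mult_strict_mono[OF A B] assms u2 by simp
    hence "(u2-u1)*e*((u1+u2)*(u1*u2) - 2*c^3) > 0"
      using assms by (simp add: power3_eq_cube mult.assoc)
    hence "u1*u2*((a/u2 + e*u2^2) - (a/u1 + e*u1^2)) > 0" using id by simp
    thus ?thesis using pos assms u2 by (auto simp add: zero_less_mult_iff)
  qed
qed

lemma keyt:
  fixes r e g T t1 t2 :: real
  assumes "r > 0" "e > 0" "g > 0" "T > 0" "T^3 = r^2/(4*g*e^2)" "0 < t1" "t1 < t2"
  shows "t2 \<le> T \<Longrightarrow> r*(1/sqrt(t2*g) + k) + e*t2 < r*(1/sqrt(t1*g) + k) + e*t1"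
    and "T \<le> t1 \<Longrightarrow> r*(1/sqrt(t1*g) + k) + e*t1 < r*(1/sqrt(t2*g) + k) + e*t2"
proof -
  define a where "a = r / sqrt g"
  define c where "c = sqrt T"
  have a0: "a > 0" unfolding a_def using assms by simp
  have c0: "c > 0" unfolding c_def using assms by simp
  have "(2*e*c^3)^2 = 4*e^2*T^3"
  proof -
    have "c^6 = (c^2)^3" by (simp flip: power_mult)
    also have "\<dots> = T^3" unfolding c_def using assms by simp
    finally show ?thesis by (simp add: power_mult_distrib flip: power_mult)
  qed
  also have "\<dots> = a^2" unfolding a_def using assms by (simp add: power_divide field_simps)
  finally have sq: "(2*e*c^3)^2 = a^2" .
  have ac: "a = 2*e*c^3"
    using sq a0 c0 assms by (metis power2_eq_iff_nonneg less_eq_real_def mult_pos_pos zero_less_power zero_less_numeral)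
  have phi: "r*(1/sqrt(t*g) + k) + e*t = (a / sqrt t + e*(sqrt t)^2) + r*k" if "t > 0" for t
    unfolding a_def using that assms by (simp add: real_sqrt_mult field_simps)
  have s1: "0 < sqrt t1" "sqrt t1 < sqrt t2" using assms by auto
  show "t2 \<le> T \<Longrightarrow> r*(1/sqrt(t2*g) + k) + e*t2 < r*(1/sqrt(t1*g) + k) + e*t1"
    using keyu(1)[OF a0 assms(2) c0 ac s1] phi assms unfolding c_def by auto
  show "T \<le> t1 \<Longrightarrow> r*(1/sqrt(t1*g) + k) + e*t1 < r*(1/sqrt(t2*g) + k) + e*t2"
    using keyu(2)[OF a0 assms(2) c0 ac s1] phi assms unfolding c_def by auto
qed


theorem lemma1:
  fixes N G :: nat and \<rho> E D C :: "nat \<Rightarrow> real" and p :: real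
    and n :: nat and x :: "nat \<Rightarrow> real"
  assumes "G > 0"
    and "\<forall>m\<in>{1..N}. \<rho> m > 0 \<and> E m > 0 \<and> D m > 0"
    and "n \<in> {1..N}"
    and "\<forall>m\<in>{1..N} - {n}. 0 \<le> x m \<and> x m \<le> D m"
  shows "{y \<in> {0..D n}. \<forall>z\<in>{0..D n}.
            client_cost N G \<rho> E C p n y x \<le> client_cost N G \<rho> E C p n z x}
         = {min (D n) (max (root 3 ((\<rho> n)\<^sup>2 / (4 * real G * (E n)\<^sup>2))
                              - (\<Sum>m\<in>{1..N} - {n}. x m)) 0)}"
proof -
  define S where "S = (\<Sum>m\<in>{1..N} - {n}. x m)"
  define K where "K = (\<rho> n)\<^sup>2 / (4 * real G * (E n)\<^sup>2)"
  define T where "T = root 3 K"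
  define y0 where "y0 = min (D n) (max (T - S) 0)"
  define cost where "cost = (\<lambda>y. client_cost N G \<rho> E C p n y x)"
  define phi where "phi = (\<lambda>t. \<rho> n * (1/sqrt(t * real G) + 1 / real G) + E n * t)"
  have r0: "\<rho> n > 0" and e0: "E n > 0" and d0: "D n > 0" using assms(2,3) by auto
  have g0: "real G > 0" using assms(1) by simp
  have S0: "S \<ge> 0" unfolding S_def using assms(4) by (intro sum_nonneg) auto
  have K0: "K > 0" unfolding K_def using r0 e0 g0 by simp
  have T0: "T > 0" unfolding T_def using K0 by simp
  have T3: "T^3 = K" unfolding T_def using K0 by simp
  have y0D: "y0 \<in> {0..D n}" unfolding y0_def using d0 by auto
  have costv: "cost y = (if y + S = 0 then PInfty else ereal (phi (y + S) - E n * S + C n + p))" for y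
    unfolding cost_def client_cost_def phi_def S_def Let_def by (simp add: algebra_simps)
  have y0S: "y0 + S > 0" unfolding y0_def using T0 d0 S0 by auto
  have key: "phi (y0 + S) < phi (z + S)" if z: "z \<in> {0..D n}" "z \<noteq> y0" "z + S > 0" for z
  proof -
    note kt = keyt[of "\<rho> n" "E n" "real G" T, OF r0 e0 g0 T0, 
        unfolded K_def[symmetric], OF T3, of _ _ "1 / real G"]
    show ?thesis
    proof (cases "T - S \<le> 0")
      case True
      then have "y0 = 0" unfolding y0_def using d0 by auto
      then show ?thesis using kt(2)[of S "z + S"] z True T0 unfolding phi_def by auto
    next
      case False
      show ?thesis
      proof (cases "T - S \<le> D n")
        case True
        then have y: "y0 + S = T" unfolding y0_def using False by auto
        show ?thesis
        proof (cases "z + S < T")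
          case True
          then show ?thesis using kt(1)[of "z + S" T] z y unfolding phi_def by auto
        next
          case False
          then have "T < z + S" using z y by auto
          then show ?thesis using kt(2)[of T "z + S"] T0 y unfolding phi_def by auto
        qed
      next
        case c2: False
        then have y: "y0 = D n" unfolding y0_def using False by auto
        have "z < D n" using z y by auto
        then show ?thesis using kt(1)[of "z + S" "D n + S"] z y c2 unfolding phi_def by auto
      qed
    qed
  qed
  have strict: "cost y0 < cost z" if z: "z \<in> {0..D n}" "z \<noteq> y0" for z
  proof (cases "z + S = 0")
    case True
    then show ?thesis using y0S by (simp add: costv)
  next
    case False
    then have "z + S > 0" using z S0 by auto
    then show ?thesis using key[OF z] y0S False by (simp add: costv)
  qed
  have "{y \<in> {0..D n}. \<forall>z\<in>{0..D n}. cost y \<le> cost z} = {y0}"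
  proof
    show "{y0} \<subseteq> {y \<in> {0..D n}. \<forall>z\<in>{0..D n}. cost y \<le> cost z}"
    proof (intro subsetI)
      fix y assume "y \<in> {y0}"
      then have y: "y = y0" by simp
      have "\<forall>z\<in>{0..D n}. cost y0 \<le> cost z"
      proof
        fix z assume z: "z \<in> {0..D n}"
        show "cost y0 \<le> cost z"
        proof (cases "z = y0")
          case False then show ?thesis using strict[OF z] by simp
        qed simp
      qed
      then show "y \<in> {y \<in> {0..D n}. \<forall>z\<in>{0..D n}. cost y \<le> cost z}" using y y0D by simp
    qed
    show "{y \<in> {0..D n}. \<forall>z\<in>{0..D n}. cost y \<le> cost z} \<subseteq> {y0}"
    proof (intro subsetI)
      fix y assume "y \<in> {y \<in> {0..D n}. \<forall>z\<in>{0..D n}. cost y \<le> cost z}"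
      then have y: "y \<in> {0..D n}" "cost y \<le> cost y0" using y0D by auto
      show "y \<in> {y0}"
      proof (rule ccontr)
        assume "y \<notin> {y0}"
        then have "cost y0 < cost y" using strict[OF y(1)] by simp
        then show False using y(2) by simp
      qed
    qed
  qed
  then show ?thesis unfolding cost_def y0_def T_def K_def S_def .
qed

end
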